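(* Let $\Phi$ be an irreducible reduced root system with basis $\Delta$, Weyl group $W$ with length function $l$, highest root $\tilde\alpha$. For every positive long root $\alpha$, $x_{-\alpha}=s_\alpha x_\alpha$ and $l(x_{-\alpha})=l(s_\alpha x_\alpha)=l(s_\alpha)+l(x_\alpha)$.
   Context: Long roots are those of maximal length for a $W$-invariant scalar product $(\cdot|\cdot)$. $\tilde I=\{\alpha\in\Delta:(\tilde\alpha|\alpha)=0\}$, $\Phi_{\tilde I}^+$ the positive roots in the span of $\tilde I$, $X_{\tilde I}=\{w\in W:w(\Phi^+_{\tilde I})\subset\Phi^+\}$; for a long root $\beta$, $x_\beta$ is the unique element of $X_{\tilde I}$ with $x_\beta(\tilde\alpha)=\beta$. *)

theory Defs
  imports "HOL-Analysis.Analysis"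
begin

text \<open>Root systems in a finite-dimensional real inner product space 'a.
  The ambient inner product is the W-invariant scalar product.\<close>

definition refl :: "'a::euclidean_space \<Rightarrow> 'a \<Rightarrow> 'a" where
  "refl \<alpha> x = x - (2 * (x \<bullet> \<alpha>) / (\<alpha> \<bullet> \<alpha>)) *\<^sub>R \<alpha>"

definition root_system :: "'a::euclidean_space set \<Rightarrow> bool" where
  "root_system \<Phi> \<longleftrightarrow> finite \<Phi> \<and> 0 \<notin> \<Phi> \<and> span \<Phi> = UNIV \<and>
     (\<forall>\<alpha>\<in>\<Phi>. refl \<alpha> ` \<Phi> = \<Phi>) \<and>
     (\<forall>\<alpha>\<in>\<Phi>. \<forall>\<beta>\<in>\<Phi>. 2 * (\<beta> \<bullet> \<alpha>) / (\<alpha> \<bullet> \<alpha>) \<in> \<int>)"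

definition reduced :: "'a::euclidean_space set \<Rightarrow> bool" where
  "reduced \<Phi> \<longleftrightarrow> (\<forall>\<alpha>\<in>\<Phi>. \<forall>c::real. c *\<^sub>R \<alpha> \<in> \<Phi> \<longrightarrow> c = 1 \<or> c = -1)"

definition irreducible_rs :: "'a::euclidean_space set \<Rightarrow> bool" where
  "irreducible_rs \<Phi> \<longleftrightarrow> \<Phi> \<noteq> {} \<and>
     \<not> (\<exists>A B. A \<union> B = \<Phi> \<and> A \<inter> B = {} \<and> A \<noteq> {} \<and> B \<noteq> {} \<and>
            (\<forall>a\<in>A. \<forall>b\<in>B. a \<bullet> b = 0))"

definition root_basis :: "'a::euclidean_space set \<Rightarrow> 'a set \<Rightarrow> bool" where
  "root_basis \<Phi> \<Delta> \<longleftrightarrow> \<Delta> \<subseteq> \<Phi> \<and> independent \<Delta> \<and> span \<Delta> = span \<Phi> \<and>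
     (\<forall>\<beta>\<in>\<Phi>. \<exists>c::'a \<Rightarrow> int. ((\<forall>d\<in>\<Delta>. c d \<ge> 0) \<or> (\<forall>d\<in>\<Delta>. c d \<le> 0)) \<and>
                 \<beta> = (\<Sum>d\<in>\<Delta>. of_int (c d) *\<^sub>R d))"

definition nonneg_comb :: "'a::euclidean_space set \<Rightarrow> 'a \<Rightarrow> bool" where
  "nonneg_comb \<Delta> v \<longleftrightarrow> (\<exists>c::'a \<Rightarrow> real. (\<forall>d\<in>\<Delta>. c d \<ge> 0) \<and> v = (\<Sum>d\<in>\<Delta>. c d *\<^sub>R d))"

definition pos_roots :: "'a::euclidean_space set \<Rightarrow> 'a set \<Rightarrow> 'a set" where
  "pos_roots \<Phi> \<Delta> = {\<beta>\<in>\<Phi>. nonneg_comb \<Delta> \<beta>}"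

definition highest_root :: "'a::euclidean_space set \<Rightarrow> 'a set \<Rightarrow> 'a \<Rightarrow> bool" where
  "highest_root \<Phi> \<Delta> h \<longleftrightarrow> h \<in> \<Phi> \<and> (\<forall>\<beta>\<in>\<Phi>. nonneg_comb \<Delta> (h - \<beta>))"

definition long_root :: "'a::euclidean_space set \<Rightarrow> 'a \<Rightarrow> bool" where
  "long_root \<Phi> \<beta> \<longleftrightarrow> \<beta> \<in> \<Phi> \<and> (\<forall>\<gamma>\<in>\<Phi>. \<gamma> \<bullet> \<gamma> \<le> \<beta> \<bullet> \<beta>)"

inductive_set weyl_group :: "'a::euclidean_space set \<Rightarrow> ('a \<Rightarrow> 'a) set" for \<Phi> where
  id: "id \<in> weyl_group \<Phi>"
| step: "\<alpha> \<in> \<Phi> \<Longrightarrow> w \<in> weyl_group \<Phi> \<Longrightarrow> refl \<alpha> \<circ> w \<in> weyl_group \<Phi>"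

definition wlen :: "'a::euclidean_space set \<Rightarrow> ('a \<Rightarrow> 'a) \<Rightarrow> nat" where
  "wlen \<Delta> w = (LEAST n. \<exists>ds. set ds \<subseteq> \<Delta> \<and> length ds = n \<and>
                        w = foldr (\<lambda>d f. refl d \<circ> f) ds id)"

definition I_tilde :: "'a::euclidean_space set \<Rightarrow> 'a \<Rightarrow> 'a set" where
  "I_tilde \<Delta> h = {\<alpha>\<in>\<Delta>. h \<bullet> \<alpha> = 0}"

definition pos_roots_I :: "'a::euclidean_space set \<Rightarrow> 'a set \<Rightarrow> 'a \<Rightarrow> 'a set" where
  "pos_roots_I \<Phi> \<Delta> h = pos_roots \<Phi> \<Delta> \<inter> span (I_tilde \<Delta> h)"

definition X_I :: "'a::euclidean_space set \<Rightarrow> 'a set \<Rightarrow> 'a \<Rightarrow> ('a \<Rightarrow> 'a) set" where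
  "X_I \<Phi> \<Delta> h = {w \<in> weyl_group \<Phi>. w ` pos_roots_I \<Phi> \<Delta> h \<subseteq> pos_roots \<Phi> \<Delta>}"

definition x_root :: "'a::euclidean_space set \<Rightarrow> 'a set \<Rightarrow> 'a \<Rightarrow> 'a \<Rightarrow> ('a \<Rightarrow> 'a)" where
  "x_root \<Phi> \<Delta> h \<beta> = (THE w. w \<in> X_I \<Phi> \<Delta> h \<and> w h = \<beta>)"

end

theory Submission
  imports Defs
begin

lemma refl_linear: "linear (refl a)"
  by (intro linearI) (simp_all add: refl_def inner_add_left algebra_simps add_divide_distrib scaleR_add_left)

lemma refl_inner: "a \<noteq> 0 \<Longrightarrow> refl a x \<bullet> refl a y = x \<bullet> y"
  by (simp add: refl_def inner_diff_left inner_diff_right algebra_simps inner_commute power2_eq_square field_simps)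

lemma refl_refl: "a \<noteq> 0 \<Longrightarrow> refl a (refl a x) = x"
  by (simp add: refl_def inner_diff_left algebra_simps field_simps)

lemma refl_self: "a \<noteq> 0 \<Longrightarrow> refl a a = -a"
  by (simp add: refl_def scaleR_2)

lemma refl_neg: "refl (-a) = refl a"
  by (auto simp: refl_def fun_eq_iff)

lemma refl_orth: "x \<bullet> a = 0 \<Longrightarrow> refl a x = x"
  by (simp add: refl_def)

lemma refl_conj:
  assumes "linear w" "\<And>x y. w x \<bullet> w y = x \<bullet> y"
  shows "refl (w d) (w x) = w (refl d x)"
  using assms by (simp add: refl_def linear_diff linear_scale)

locale RS =
  fixes \<Phi> \<Delta> :: "'a::euclidean_space set"
  assumes rs: "root_system \<Phi>" and red: "reduced \<Phi>" and bas: "root_basis \<Phi> \<Delta>"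
begin

abbreviation "P \<equiv> pos_roots \<Phi> \<Delta>"

lemma finPhi: "finite \<Phi>" and zero_notin: "0 \<notin> \<Phi>"
  and refl_closed: "\<alpha> \<in> \<Phi> \<Longrightarrow> \<beta> \<in> \<Phi> \<Longrightarrow> refl \<alpha> \<beta> \<in> \<Phi>"
  using rs unfolding root_system_def by blast+

lemma Delta_sub: "\<Delta> \<subseteq> \<Phi>" and indep: "independent \<Delta>" and spanD: "span \<Delta> = UNIV"
  using bas rs unfolding root_basis_def root_system_def by auto

lemma finD: "finite \<Delta>" using Delta_sub finPhi finite_subset by blast

lemma nz: "\<alpha> \<in> \<Phi> \<Longrightarrow> \<alpha> \<noteq> 0" using zero_notin by auto

lemma neg_closed: "\<beta> \<in> \<Phi> \<Longrightarrow> -\<beta> \<in> \<Phi>"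
  using refl_closed[of \<beta> \<beta>] refl_self[OF nz] by auto

definition coord :: "'a \<Rightarrow> 'a \<Rightarrow> real" where
  "coord e = (SOME g. linear g \<and> (\<forall>x\<in>\<Delta>. g x = (if x = e then 1 else 0)))"

lemma coord_ex: "linear (coord e) \<and> (\<forall>x\<in>\<Delta>. coord e x = (if x = e then 1 else 0))"
  unfolding coord_def
  using linear_independent_extend[OF indep, of "\<lambda>x. if x = e then 1 else 0"]
  by (rule someI_ex)

lemma coord_linear: "linear (coord e)" using coord_ex by blast

lemma coord_basis: "d \<in> \<Delta> \<Longrightarrow> coord e d = (if d = e then 1 else 0)"
  using coord_ex by blast

lemma coord_sum: "coord e (\<Sum>d\<in>\<Delta>. c d *\<^sub>R d) = (if e \<in> \<Delta> then c e else 0)"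
  using finD by (simp add: linear_sum[OF coord_linear] linear_scale[OF coord_linear] coord_basis
      if_distrib[of "\<lambda>x. _ * x"] cong: if_cong)

lemma expand: "v = (\<Sum>d\<in>\<Delta>. coord d v *\<^sub>R d)"
proof -
  have l: "linear (\<lambda>v. \<Sum>d\<in>\<Delta>. coord d v *\<^sub>R d)"
    by (intro linearI) (simp_all add: linear_add[OF coord_linear] linear_scale[OF coord_linear]
        scaleR_add_left sum.distrib scaleR_sum_right)
  have "id v = (\<Sum>d\<in>\<Delta>. coord d v *\<^sub>R d)"
  proof (rule linear_eq_on_span[OF linear_id l])
    fix x assume "x \<in> \<Delta>"
    then show "id x = (\<Sum>d\<in>\<Delta>. coord d x *\<^sub>R d)"
      using finD by (simp add: coord_basis if_distrib[of "\<lambda>c. c *\<^sub>R _"] cong: if_cong)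
  qed (simp add: spanD)
  then show ?thesis by simp
qed

lemma coord_zero: "(\<And>e. e \<in> \<Delta> \<Longrightarrow> coord e v = 0) \<Longrightarrow> v = 0"
  by (subst expand) simp

lemma coord_eqI: "(\<And>e. e \<in> \<Delta> \<Longrightarrow> coord e v = coord e w) \<Longrightarrow> v = w"
  using coord_zero[of "v - w"] by (simp add: linear_diff[OF coord_linear])

lemma root_sign: "\<beta> \<in> \<Phi> \<Longrightarrow> (\<forall>e\<in>\<Delta>. coord e \<beta> \<ge> 0) \<or> (\<forall>e\<in>\<Delta>. coord e \<beta> \<le> 0)"
proof -
  assume "\<beta> \<in> \<Phi>"
  then obtain c :: "'a \<Rightarrow> int" where c: "(\<forall>d\<in>\<Delta>. c d \<ge> 0) \<or> (\<forall>d\<in>\<Delta>. c d \<le> 0)"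
    "\<beta> = (\<Sum>d\<in>\<Delta>. of_int (c d) *\<^sub>R d)"
    using bas unfolding root_basis_def by blast
  have "\<forall>e\<in>\<Delta>. coord e \<beta> = of_int (c e)" using c(2) coord_sum by simp
  then show ?thesis using c(1) by auto
qed

lemma nonneg_comb_iff: "nonneg_comb \<Delta> v \<longleftrightarrow> (\<forall>e\<in>\<Delta>. coord e v \<ge> 0)"
proof
  assume "nonneg_comb \<Delta> v"
  then obtain c where c: "\<forall>d\<in>\<Delta>. c d \<ge> 0" "v = (\<Sum>d\<in>\<Delta>. c d *\<^sub>R d)"
    unfolding nonneg_comb_def by blast
  show "\<forall>e\<in>\<Delta>. coord e v \<ge> 0"
  proof
    fix e assume e: "e \<in> \<Delta>"
    have "coord e v = c e" unfolding c(2) coord_sum using e by simp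
    then show "coord e v \<ge> 0" using c(1) e by simp
  qed
next
  assume a: "\<forall>e\<in>\<Delta>. coord e v \<ge> 0"
  show "nonneg_comb \<Delta> v" unfolding nonneg_comb_def
    by (intro exI[of _ "\<lambda>d. coord d v"] conjI) (fact a, rule expand)
qed

lemma pos_iff: "\<beta> \<in> P \<longleftrightarrow> \<beta> \<in> \<Phi> \<and> (\<forall>e\<in>\<Delta>. 0 \<le> coord e \<beta>)"
  by (simp add: pos_roots_def nonneg_comb_iff)

lemma neg_pos: "\<beta> \<in> \<Phi> \<Longrightarrow> \<beta> \<notin> P \<Longrightarrow> -\<beta> \<in> P"
  using root_sign[of \<beta>] neg_closed[of \<beta>]
  by (auto simp: pos_iff linear_neg[OF coord_linear])

lemma pos_not_neg: "\<beta> \<in> P \<Longrightarrow> -\<beta> \<notin> P"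
proof
  assume a: "\<beta> \<in> P" "-\<beta> \<in> P"
  then have "\<forall>e\<in>\<Delta>. 0 \<le> coord e \<beta> \<and> coord e \<beta> \<le> 0" by (auto simp: pos_iff linear_neg[OF coord_linear])
  then have "\<forall>e\<in>\<Delta>. coord e \<beta> = 0" by (meson order_antisym)
  then have "\<beta> = 0" using coord_zero by blast
  then show False using a nz by (auto simp: pos_iff)
qed

lemma Delta_pos: "d \<in> \<Delta> \<Longrightarrow> d \<in> P"
  using Delta_sub by (auto simp: pos_iff coord_basis)

lemma simple_perm:
  assumes d: "d \<in> \<Delta>" and b: "\<beta> \<in> P" "\<beta> \<noteq> d"
  shows "refl d \<beta> \<in> P \<and> refl d \<beta> \<noteq> d"
proof -
  have bP: "\<beta> \<in> \<Phi>" using b by (simp add: pos_iff)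
  have dP: "d \<in> \<Phi>" using d Delta_sub by auto
  have "\<exists>e\<in>\<Delta>. e \<noteq> d \<and> coord e \<beta> > 0"
  proof (rule ccontr)
    assume "\<not> ?thesis"
    then have z: "\<forall>e\<in>\<Delta>. e \<noteq> d \<longrightarrow> coord e \<beta> = 0" using b by (force simp: pos_iff)
    have "\<beta> = coord d \<beta> *\<^sub>R d"
      by (rule coord_eqI) (use z d in \<open>auto simp: linear_scale[OF coord_linear] coord_basis\<close>)
    then have "coord d \<beta> = 1 \<or> coord d \<beta> = -1" using red bP dP unfolding reduced_def by metis
    moreover have "coord d \<beta> \<ge> 0" using b d by (simp add: pos_iff)
    ultimately have "\<beta> = d" using \<open>\<beta> = coord d \<beta> *\<^sub>R d\<close> by auto
    then show False using b by simp
  qed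
  then obtain e where e: "e \<in> \<Delta>" "e \<noteq> d" "coord e \<beta> > 0" by blast
  have r: "refl d \<beta> \<in> \<Phi>" using refl_closed dP bP by blast
  have "coord e (refl d \<beta>) = coord e \<beta>"
    using e d by (simp add: refl_def linear_diff[OF coord_linear] linear_scale[OF coord_linear] coord_basis)
  then have "refl d \<beta> \<in> P" using root_sign[OF r] e r by (force simp: pos_iff)
  moreover have "refl d \<beta> \<noteq> d"
  proof
    assume "refl d \<beta> = d"
    then have "\<beta> = -d" using refl_refl[OF nz[OF dP], of \<beta>] refl_self[OF nz[OF dP]] by simp
    then show False using b pos_not_neg Delta_pos d by blast
  qed
  ultimately show ?thesis by blast
qed

abbreviation "W \<equiv> weyl_group \<Phi>"

lemma W_id': "(\<lambda>a. a) \<in> W" using weyl_group.id[of \<Phi>] unfolding id_def .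

lemma refl_W: assumes "\<alpha> \<in> \<Phi>" shows "refl \<alpha> \<in> W"
proof -
  have "refl \<alpha> \<circ> id \<in> W" by (rule weyl_group.step[OF assms weyl_group.id])
  then show ?thesis by simp
qed

lemma W_props: "w \<in> W \<Longrightarrow> linear w \<and> (\<forall>x y. w x \<bullet> w y = x \<bullet> y) \<and> (\<forall>\<beta>\<in>\<Phi>. w \<beta> \<in> \<Phi>)"
proof (induction rule: weyl_group.induct)
  case id then show ?case using linear_id by (simp add: id_def)
next
  case (step \<alpha> w)
  have l: "linear (refl \<alpha> \<circ> w)" using linear_compose step refl_linear by blast
  have i: "\<forall>x y. (refl \<alpha> \<circ> w) x \<bullet> (refl \<alpha> \<circ> w) y = x \<bullet> y"
    using step refl_inner[OF nz[OF step(1)]] by simp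
  have p: "\<forall>\<beta>\<in>\<Phi>. (refl \<alpha> \<circ> w) \<beta> \<in> \<Phi>"
    using step refl_closed by simp
  show ?case using l i p by (intro conjI)
qed

lemma W_linear: "w \<in> W \<Longrightarrow> linear w" using W_props by blast
lemma W_inner: "w \<in> W \<Longrightarrow> w x \<bullet> w y = x \<bullet> y" using W_props by blast
lemma W_Phi: "w \<in> W \<Longrightarrow> \<beta> \<in> \<Phi> \<Longrightarrow> w \<beta> \<in> \<Phi>" using W_props by blast
lemma W_neg: "w \<in> W \<Longrightarrow> w (-x) = - w x" using W_linear linear_neg by blast

lemma W_comp: "w1 \<in> W \<Longrightarrow> w2 \<in> W \<Longrightarrow> w1 \<circ> w2 \<in> W"
proof (induction rule: weyl_group.induct)
  case id then show ?case by simp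
next
  case (step \<alpha> w)
  then have "w \<circ> w2 \<in> W" by (simp add: comp_def)
  then have "refl \<alpha> \<circ> (w \<circ> w2) \<in> W" by (rule weyl_group.step[OF step(1)])
  then show ?case by (simp add: comp_def)
qed

lemma refl_invol: "\<alpha> \<in> \<Phi> \<Longrightarrow> refl \<alpha> \<circ> refl \<alpha> = id"
  by (auto simp: fun_eq_iff refl_refl[OF nz])

lemma W_inv: "w \<in> W \<Longrightarrow> \<exists>v\<in>W. v \<circ> w = id \<and> w \<circ> v = id"
proof (induction rule: weyl_group.induct)
  case id then show ?case using W_id' by (auto simp: id_def)
next
  case (step \<alpha> w)
  then obtain v where v: "v \<in> W" "v \<circ> w = id" "w \<circ> v = id" by blast
  have a: "v \<circ> refl \<alpha> \<in> W" using W_comp[OF v(1) refl_W[OF step(1)]] .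
  have b: "(v \<circ> refl \<alpha>) \<circ> (refl \<alpha> \<circ> w) = id"
    using v refl_refl[OF nz[OF step(1)]] by (auto simp: fun_eq_iff)
  have c: "(refl \<alpha> \<circ> w) \<circ> (v \<circ> refl \<alpha>) = id"
    using v refl_refl[OF nz[OF step(1)]] by (auto simp: fun_eq_iff)
  have "v \<circ> refl \<alpha> \<in> W \<and> (v \<circ> refl \<alpha>) \<circ> (refl \<alpha> \<circ> w) = id \<and> (refl \<alpha> \<circ> w) \<circ> (v \<circ> refl \<alpha>) = id"
    using a b c by (intro conjI)
  then show ?case by (elim conjE) (rule bexI[rotated], assumption, rule conjI)
qed

lemma W_dich: "w \<in> W \<Longrightarrow> \<beta> \<in> \<Phi> \<Longrightarrow> w \<beta> \<notin> P \<Longrightarrow> - w \<beta> \<in> P"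
  using neg_pos W_Phi by blast

definition N :: "('a \<Rightarrow> 'a) \<Rightarrow> 'a set" where "N w = {\<beta>\<in>P. w \<beta> \<notin> P}"
definition ninv :: "('a \<Rightarrow> 'a) \<Rightarrow> nat" where "ninv w = card (N w)"

lemma finP: "finite P" using finPhi by (rule finite_subset[rotated]) (auto simp: pos_roots_def)
lemma finN: "finite (N w)" using finP by (rule finite_subset[rotated]) (auto simp: N_def)

lemma N_step:
  assumes w: "w \<in> W" and d: "d \<in> \<Delta>"
  shows "N (w \<circ> refl d) = refl d ` (N w - {d}) \<union> (if w d \<in> P then {d} else {})"
proof -
  have dP: "d \<in> \<Phi>" using d Delta_sub by auto
  have dpos: "d \<in> P" using Delta_pos d by auto
  have rr: "\<And>x. refl d (refl d x) = x" using refl_refl[OF nz[OF dP]] .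
  have rd: "refl d d = -d" using refl_self[OF nz[OF dP]] .
  show ?thesis
  proof (intro set_eqI iffI)
    fix \<beta> assume b: "\<beta> \<in> N (w \<circ> refl d)"
    then have bP: "\<beta> \<in> P" and wb: "w (refl d \<beta>) \<notin> P" by (auto simp: N_def)
    show "\<beta> \<in> refl d ` (N w - {d}) \<union> (if w d \<in> P then {d} else {})"
    proof (cases "\<beta> = d")
      case True
      then have "- w d \<notin> P" using wb rd W_neg[OF w] by simp
      then have "w d \<in> P" using W_dich[OF w dP] by blast
      then show ?thesis using True by simp
    next
      case False
      then have "refl d \<beta> \<in> N w - {d}" unfolding N_def using simple_perm[OF d bP False] wb by simp
      then have "refl d (refl d \<beta>) \<in> refl d ` (N w - {d})" by blast
      then show ?thesis using rr by simp
    qed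
  next
    fix \<beta> assume "\<beta> \<in> refl d ` (N w - {d}) \<union> (if w d \<in> P then {d} else {})"
    then show "\<beta> \<in> N (w \<circ> refl d)"
    proof
      assume "\<beta> \<in> refl d ` (N w - {d})"
      then obtain \<gamma> where g: "\<gamma> \<in> P" "\<gamma> \<noteq> d" "w \<gamma> \<notin> P" "\<beta> = refl d \<gamma>" unfolding N_def by blast
      have "\<beta> \<in> P" using simple_perm[OF d g(1,2)] g(4) by simp
      moreover have "(w \<circ> refl d) \<beta> \<notin> P" using g(3,4) rr by simp
      ultimately show ?thesis unfolding N_def by blast
    next
      assume "\<beta> \<in> (if w d \<in> P then {d} else {})"
      then have bd: "\<beta> = d" and wd: "w d \<in> P" by (auto split: if_splits)
      have "(w \<circ> refl d) \<beta> = - w d" using bd rd W_neg[OF w] by simp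
      then have "(w \<circ> refl d) \<beta> \<notin> P" using pos_not_neg[OF wd] by simp
      then show ?thesis using dpos bd unfolding N_def by blast
    qed
  qed
qed

lemma ninv_step:
  assumes w: "w \<in> W" and d: "d \<in> \<Delta>"
  shows "ninv (w \<circ> refl d) = (if w d \<in> P then ninv w + 1 else ninv w - 1)"
    and "w d \<notin> P \<Longrightarrow> ninv w \<ge> 1"
proof -
  have dP: "d \<in> \<Phi>" using d Delta_sub by auto
  have dpos: "d \<in> P" using Delta_pos d by auto
  have rr: "\<And>x. refl d (refl d x) = x" using refl_refl[OF nz[OF dP]] .
  have inj: "inj_on (refl d) X" for X by (metis inj_onI rr)
  have "\<forall>\<gamma>\<in>N w - {d}. refl d \<gamma> \<noteq> d" using simple_perm[OF d] unfolding N_def by blast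
  then have "d \<notin> refl d ` (N w - {d})"
  proof (intro notI)
    assume ne: "\<forall>\<gamma>\<in>N w - {d}. refl d \<gamma> \<noteq> d" and im: "d \<in> refl d ` (N w - {d})"
    from im obtain \<gamma> where g: "\<gamma> \<in> N w - {d}" "d = refl d \<gamma>" by (rule imageE)
    have "refl d \<gamma> \<noteq> d" using ne g(1) by (rule bspec)
    then show False using g(2) by simp
  qed
  then have disj: "refl d ` (N w - {d}) \<inter> (if w d \<in> P then {d} else {}) = {}"
    by auto
  have c1: "card (refl d ` (N w - {d})) = card (N w - {d})" using inj card_image by blast
  have dN: "d \<in> N w \<longleftrightarrow> w d \<notin> P" using dpos by (simp add: N_def)
  show "ninv (w \<circ> refl d) = (if w d \<in> P then ninv w + 1 else ninv w - 1)"
    unfolding ninv_def N_step[OF w d]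
    by (subst card_Un_disjoint) (use finN disj c1 dN in \<open>auto simp: card_Diff_singleton_if\<close>)
  show "w d \<notin> P \<Longrightarrow> ninv w \<ge> 1"
    unfolding ninv_def using dN finN by (metis card_0_eq empty_iff less_one not_le)
qed

end



definition wprod :: "'a::euclidean_space list \<Rightarrow> 'a \<Rightarrow> 'a" where
  "wprod ds = foldr (\<lambda>d f. refl d \<circ> f) ds id"

lemma wprod_Nil[simp]: "wprod [] = id" by (simp add: wprod_def)
lemma wprod_Cons[simp]: "wprod (d # ds) = refl d \<circ> wprod ds" by (simp add: wprod_def)
lemma wprod_append: "wprod (xs @ ys) = wprod xs \<circ> wprod ys"
  by (induction xs) (auto simp: comp_assoc)

lemma wlen_wprod: "wlen \<Delta> w = (LEAST n. \<exists>ds. set ds \<subseteq> \<Delta> \<and> length ds = n \<and> w = wprod ds)"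
  by (simp add: wlen_def wprod_def)

context RS
begin

lemma wprod_W: "set ds \<subseteq> \<Delta> \<Longrightarrow> wprod ds \<in> W"
proof (induction ds)
  case Nil then show ?case using W_id' by simp
next
  case (Cons d ds)
  then have "refl d \<circ> wprod ds \<in> W" using Delta_sub by (intro weyl_group.step) auto
  then show ?case by (simp add: comp_def)
qed

lemma wprod_rev: "set ds \<subseteq> \<Delta> \<Longrightarrow> (\<forall>x. wprod (rev ds) (wprod ds x) = x) \<and> (\<forall>x. wprod ds (wprod (rev ds) x) = x)"
proof (induction ds)
  case Nil then show ?case by simp
next
  case (Cons d ds)
  then have dP: "d \<in> \<Phi>" using Delta_sub by auto
  have rr: "\<And>x. refl d (refl d x) = x" using refl_refl[OF nz[OF dP]] .
  show ?case using Cons rr by (simp add: wprod_append)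
qed

lemma deletion:
  assumes "set ds \<subseteq> \<Delta>" "d \<in> \<Delta>" "wprod ds d \<notin> P"
  shows "\<exists>i<length ds. wprod ds \<circ> refl d = wprod (take i ds @ drop (Suc i) ds)"
  using assms
proof (induction ds)
  case Nil then show ?case using Delta_pos by simp
next
  case (Cons e es)
  have eD: "e \<in> \<Delta>" and esD: "set es \<subseteq> \<Delta>" using Cons by auto
  show ?case
  proof (cases "wprod es d \<in> P")
    case False
    then obtain i where i: "i < length es" "wprod es \<circ> refl d = wprod (take i es @ drop (Suc i) es)"
      using Cons esD by blast
    have "wprod (e # es) \<circ> refl d = refl e \<circ> (wprod es \<circ> refl d)"
      by (simp only: wprod_Cons comp_assoc)
    also have "\<dots> = refl e \<circ> wprod (take i es @ drop (Suc i) es)" using i(2) by (simp only:)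
    also have "\<dots> = wprod (take (Suc i) (e # es) @ drop (Suc (Suc i)) (e # es))" by simp
    finally have "wprod (e # es) \<circ> refl d = wprod (take (Suc i) (e # es) @ drop (Suc (Suc i)) (e # es))" .
    then show ?thesis using i(1) by (intro exI[of _ "Suc i"] conjI) (simp_all only: length_Cons Suc_less_eq)
  next
    case True
    have "refl e (wprod es d) \<notin> P" using Cons.prems(3) by simp
    then have g: "wprod es d = e" using simple_perm[OF eD True] by blast
    have lin: "linear (wprod es)" and inn: "\<And>x y. wprod es x \<bullet> wprod es y = x \<bullet> y"
      using W_linear W_inner wprod_W[OF esD] by auto
    have c: "refl e (wprod es x) = wprod es (refl d x)" for x
      using refl_conj[OF lin inn, of d x] g by simp
    have dP: "d \<in> \<Phi>" using Cons Delta_sub by auto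
    have "wprod (e # es) \<circ> refl d = wprod es"
      using c refl_refl[OF nz[OF dP]] by (simp add: fun_eq_iff)
    then have "wprod (e # es) \<circ> refl d = wprod (take 0 (e # es) @ drop (Suc 0) (e # es))" by simp
    moreover have "0 < length (e # es)" by simp
    ultimately show ?thesis by blast
  qed
qed

lemma wlen_le: "set ds \<subseteq> \<Delta> \<Longrightarrow> wlen \<Delta> (wprod ds) \<le> length ds"
  unfolding wlen_wprod by (rule Least_le) blast

lemma wlen_ex: "set ds \<subseteq> \<Delta> \<Longrightarrow> w = wprod ds \<Longrightarrow>
    \<exists>es. set es \<subseteq> \<Delta> \<and> length es = wlen \<Delta> w \<and> w = wprod es"
  unfolding wlen_wprod by (rule LeastI_ex) blast

lemma ninv_id: "ninv id = 0" by (simp add: ninv_def N_def)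

lemma ninv_reduced: "set ds \<subseteq> \<Delta> \<Longrightarrow> wlen \<Delta> (wprod ds) = length ds \<Longrightarrow> ninv (wprod ds) = length ds"
proof (induction ds rule: rev_induct)
  case Nil then show ?case using ninv_id by (simp add: id_def)
next
  case (snoc d ds)
  have dsD: "set ds \<subseteq> \<Delta>" and dD: "d \<in> \<Delta>" using snoc by auto
  have wds: "wprod (ds @ [d]) = wprod ds \<circ> refl d" by (simp add: wprod_append)
  have red: "wlen \<Delta> (wprod ds) = length ds"
  proof (rule ccontr)
    assume "wlen \<Delta> (wprod ds) \<noteq> length ds"
    then have lt: "wlen \<Delta> (wprod ds) < length ds" using wlen_le[OF dsD] by simp
    obtain es where es: "set es \<subseteq> \<Delta>" "length es = wlen \<Delta> (wprod ds)" "wprod ds = wprod es"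
      using wlen_ex[OF dsD refl] by blast
    have "wprod (ds @ [d]) = wprod (es @ [d])" using es(3) by (simp add: wprod_append)
    then have "wlen \<Delta> (wprod (ds @ [d])) \<le> length (es @ [d])"
      using wlen_le[of "es @ [d]"] es(1) dD by simp
    then show False using snoc.prems(2) lt es(2) by simp
  qed
  have IH: "ninv (wprod ds) = length ds" using snoc.IH[OF dsD red] .
  have pos: "wprod ds d \<in> P"
  proof (rule ccontr)
    assume "wprod ds d \<notin> P"
    then obtain i where i: "i < length ds" "wprod ds \<circ> refl d = wprod (take i ds @ drop (Suc i) ds)"
      using deletion[OF dsD dD] by blast
    have "set (take i ds @ drop (Suc i) ds) \<subseteq> \<Delta>" using dsD
      by (auto dest: in_set_takeD in_set_dropD)
    then have "wlen \<Delta> (wprod (ds @ [d])) \<le> length (take i ds @ drop (Suc i) ds)"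
      using wlen_le i(2) wds by metis
    then show False using snoc.prems(2) i(1) by simp
  qed
  have X: "ninv (wprod ds \<circ> refl d) = length ds + 1" using ninv_step(1)[OF wprod_W[OF dsD] dD] pos IH by simp
  show ?case by (metis X wds length_append_singleton Suc_eq_plus1)
qed

end

context RS
begin

definition ht :: "'a \<Rightarrow> real" where "ht v = (\<Sum>e\<in>\<Delta>. coord e v)"

lemma ht_linear: "linear ht"
  unfolding ht_def
  by (intro linearI) (simp_all add: linear_add[OF coord_linear] linear_scale[OF coord_linear]
      sum.distrib sum_distrib_left)

lemma ht_simple: "d \<in> \<Delta> \<Longrightarrow> ht d = 1"
  unfolding ht_def using finD by (simp add: coord_basis)

lemma ht_refl: "d \<in> \<Delta> \<Longrightarrow> ht (refl d x) = ht x - 2 * (x \<bullet> d) / (d \<bullet> d)"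
  by (simp add: refl_def linear_diff[OF ht_linear] linear_scale[OF ht_linear] ht_simple)

lemma inner_expand: "x \<bullet> v = (\<Sum>e\<in>\<Delta>. coord e v * (x \<bullet> e))"
proof -
  have "x \<bullet> v = x \<bullet> (\<Sum>e\<in>\<Delta>. coord e v *\<^sub>R e)" by (subst expand[of v]) (rule refl)
  also have "\<dots> = (\<Sum>e\<in>\<Delta>. coord e v * (x \<bullet> e))" by (simp add: inner_sum_right)
  finally show ?thesis .
qed

lemma root_conj: "\<beta> \<in> P \<Longrightarrow> \<exists>ds d. set ds \<subseteq> \<Delta> \<and> d \<in> \<Delta> \<and> \<beta> = wprod ds d"
proof (induction "card {\<gamma>\<in>\<Phi>. ht \<gamma> < ht \<beta>}" arbitrary: \<beta> rule: less_induct)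
  case less
  show ?case
  proof (cases "\<beta> \<in> \<Delta>")
    case True
    then show ?thesis by (intro exI[of _ "[]"] exI[of _ \<beta>]) simp
  next
    case False
    have bP: "\<beta> \<in> \<Phi>" and cpos: "\<forall>e\<in>\<Delta>. 0 \<le> coord e \<beta>" using less.prems by (auto simp: pos_iff)
    have "0 < \<beta> \<bullet> \<beta>" using nz[OF bP] by simp
    then have "0 < (\<Sum>e\<in>\<Delta>. coord e \<beta> * (\<beta> \<bullet> e))" using inner_expand[of \<beta> \<beta>] by simp
    have "\<exists>d\<in>\<Delta>. 0 < coord d \<beta> * (\<beta> \<bullet> d)"
    proof (rule ccontr)
      assume "\<not> ?thesis"
      then have "(\<Sum>e\<in>\<Delta>. coord e \<beta> * (\<beta> \<bullet> e)) \<le> 0" by (intro sum_nonpos) (simp add: not_less)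
      then show False using \<open>0 < (\<Sum>e\<in>\<Delta>. coord e \<beta> * (\<beta> \<bullet> e))\<close> by simp
    qed
    then obtain d where d: "d \<in> \<Delta>" "0 < coord d \<beta> * (\<beta> \<bullet> d)" by blast
    have "coord d \<beta> \<ge> 0" using cpos d(1) by blast
    then have bd: "\<beta> \<bullet> d > 0" using d(2) by (auto simp: zero_less_mult_iff)
    have dP: "d \<in> \<Phi>" using d Delta_sub by auto
    have dd: "d \<bullet> d > 0" using nz[OF dP] by simp
    define \<beta>' where "\<beta>' = refl d \<beta>"
    have "\<beta> \<noteq> d" using False d(1) by auto
    then have b'P: "\<beta>' \<in> P" using simple_perm[OF d(1) less.prems] unfolding \<beta>'_def by blast
    have htlt: "ht \<beta>' < ht \<beta>" unfolding \<beta>'_def ht_refl[OF d(1)] using bd dd by simp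
    have sub: "{\<gamma>\<in>\<Phi>. ht \<gamma> < ht \<beta>'} \<subset> {\<gamma>\<in>\<Phi>. ht \<gamma> < ht \<beta>}"
    proof
      show "{\<gamma>\<in>\<Phi>. ht \<gamma> < ht \<beta>'} \<subseteq> {\<gamma>\<in>\<Phi>. ht \<gamma> < ht \<beta>}" using htlt by auto
      have "\<beta>' \<in> \<Phi>" using b'P by (simp add: pos_iff)
      then show "{\<gamma>\<in>\<Phi>. ht \<gamma> < ht \<beta>'} \<noteq> {\<gamma>\<in>\<Phi>. ht \<gamma> < ht \<beta>}" using htlt by blast
    qed
    have cl: "card {\<gamma>\<in>\<Phi>. ht \<gamma> < ht \<beta>'} < card {\<gamma>\<in>\<Phi>. ht \<gamma> < ht \<beta>}"
      using sub finPhi by (intro psubset_card_mono) auto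
    obtain ds e where e: "set ds \<subseteq> \<Delta>" "e \<in> \<Delta>" "\<beta>' = wprod ds e"
      using less.hyps[OF cl b'P] by blast
    have "\<beta> = refl d \<beta>'" unfolding \<beta>'_def using refl_refl[OF nz[OF dP]] by simp
    then have "\<beta> = wprod (d # ds) e" using e(3) by simp
    then show ?thesis using e d by (intro exI[of _ "d # ds"] exI[of _ e]) auto
  qed
qed

lemma refl_words: "\<alpha> \<in> \<Phi> \<Longrightarrow> \<exists>ds. set ds \<subseteq> \<Delta> \<and> refl \<alpha> = wprod ds"
proof -
  have main: "\<exists>ds. set ds \<subseteq> \<Delta> \<and> refl \<beta> = wprod ds" if b: "\<beta> \<in> P" for \<beta>
  proof -
    obtain ds d where dd: "set ds \<subseteq> \<Delta>" "d \<in> \<Delta>" "\<beta> = wprod ds d" using root_conj[OF b] by blast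
    have lin: "linear (wprod ds)" and inn: "\<And>x y. wprod ds x \<bullet> wprod ds y = x \<bullet> y"
      using W_linear W_inner wprod_W[OF dd(1)] by auto
    have inv: "\<And>x. wprod ds (wprod (rev ds) x) = x" using wprod_rev[OF dd(1)] by blast
    have "refl \<beta> y = wprod (ds @ d # rev ds) y" for y
    proof -
      have "refl \<beta> y = refl (wprod ds d) (wprod ds (wprod (rev ds) y))" using dd(3) inv by simp
      also have "\<dots> = wprod ds (refl d (wprod (rev ds) y))" by (rule refl_conj[OF lin inn])
      also have "\<dots> = wprod (ds @ d # rev ds) y" by (simp add: wprod_append)
      finally show ?thesis .
    qed
    then have "refl \<beta> = wprod (ds @ d # rev ds)" by (rule ext)
    moreover have "set (ds @ d # rev ds) \<subseteq> \<Delta>" using dd by auto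
    ultimately show ?thesis by blast
  qed
  assume a: "\<alpha> \<in> \<Phi>"
  show ?thesis
  proof (cases "\<alpha> \<in> P")
    case True then show ?thesis using main by blast
  next
    case False
    then have "-\<alpha> \<in> P" using neg_pos a by blast
    then show ?thesis using main[of "-\<alpha>"] refl_neg by metis
  qed
qed

lemma W_words: "w \<in> W \<Longrightarrow> \<exists>ds. set ds \<subseteq> \<Delta> \<and> w = wprod ds"
proof (induction rule: weyl_group.induct)
  case id then show ?case by (intro exI[of _ "[]"]) simp
next
  case (step \<alpha> w)
  obtain xs where xs: "set xs \<subseteq> \<Delta>" "refl \<alpha> = wprod xs" using refl_words[OF step(1)] by blast
  obtain ys where ys: "set ys \<subseteq> \<Delta>" "w = wprod ys" using step by blast
  have "refl \<alpha> \<circ> w = wprod (xs @ ys)" using xs ys by (simp add: wprod_append)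
  then show ?case using xs ys by (intro exI[of _ "xs @ ys"]) auto
qed

lemma W_pos_prop:
  assumes w: "w \<in> W" and S: "S \<subseteq> \<Delta>" and ws: "\<forall>d\<in>S. w d \<in> P"
    and b: "\<beta> \<in> P" and z: "\<forall>e\<in>\<Delta> - S. coord e \<beta> = 0"
  shows "w \<beta> \<in> P"
proof -
  have bP: "\<beta> \<in> \<Phi>" using b by (simp add: pos_iff)
  have lin: "linear w" using W_linear[OF w] .
  have "coord f (w \<beta>) \<ge> 0" if f: "f \<in> \<Delta>" for f
  proof -
    have "coord f (w \<beta>) = coord f (w (\<Sum>e\<in>\<Delta>. coord e \<beta> *\<^sub>R e))" by (subst expand[of \<beta>]) (rule refl)
    also have "\<dots> = (\<Sum>e\<in>\<Delta>. coord e \<beta> * coord f (w e))"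
      by (simp add: linear_sum[OF lin] linear_scale[OF lin] linear_sum[OF coord_linear] linear_scale[OF coord_linear])
    also have "\<dots> \<ge> 0"
    proof (rule sum_nonneg)
      fix e assume e: "e \<in> \<Delta>"
      show "0 \<le> coord e \<beta> * coord f (w e)"
      proof (cases "e \<in> S")
        case True
        then have "w e \<in> P" using ws by blast
        then have "coord f (w e) \<ge> 0" using f by (simp add: pos_iff)
        moreover have "coord e \<beta> \<ge> 0" using b e by (simp add: pos_iff)
        ultimately show ?thesis by simp
      next
        case False then show ?thesis using z e by simp
      qed
    qed
    finally show ?thesis .
  qed
  then show ?thesis using W_Phi[OF w bP] by (simp add: pos_iff)
qed

lemma thmA: assumes w: "w \<in> W" and a: "\<forall>d\<in>\<Delta>. w d \<in> P" shows "w = id"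
proof -
  obtain ds where ds: "set ds \<subseteq> \<Delta>" "w = wprod ds" using W_words[OF w] by blast
  obtain es where es: "set es \<subseteq> \<Delta>" "length es = wlen \<Delta> w" "w = wprod es"
    using wlen_ex[OF ds] by blast
  have n: "ninv w = length es" using ninv_reduced[OF es(1)] es by simp
  have "N w = {}" unfolding N_def using W_pos_prop[OF w order_refl a] by auto
  then have "length es = 0" using n by (simp add: ninv_def)
  then show ?thesis using es(3) by simp
qed

lemma wlen_ninv: assumes w: "w \<in> W" shows "wlen \<Delta> w = ninv w"
proof -
  obtain ds where ds: "set ds \<subseteq> \<Delta>" "w = wprod ds" using W_words[OF w] by blast
  obtain es where es: "set es \<subseteq> \<Delta>" "length es = wlen \<Delta> w" "w = wprod es"
    using wlen_ex[OF ds] by blast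
  show ?thesis using ninv_reduced[OF es(1)] es by simp
qed

lemma wlen_sub: assumes "u \<in> W" "v \<in> W" shows "wlen \<Delta> (u \<circ> v) \<le> wlen \<Delta> u + wlen \<Delta> v"
proof -
  obtain xs0 where xs0: "set xs0 \<subseteq> \<Delta>" "u = wprod xs0" using W_words[OF assms(1)] by blast
  obtain xs where xs: "set xs \<subseteq> \<Delta>" "length xs = wlen \<Delta> u" "u = wprod xs"
    using wlen_ex[OF xs0] by blast
  obtain ys0 where ys0: "set ys0 \<subseteq> \<Delta>" "v = wprod ys0" using W_words[OF assms(2)] by blast
  obtain ys where ys: "set ys \<subseteq> \<Delta>" "length ys = wlen \<Delta> v" "v = wprod ys"
    using wlen_ex[OF ys0] by blast
  have "u \<circ> v = wprod (xs @ ys)" using xs ys by (simp add: wprod_append)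
  then have "wlen \<Delta> (u \<circ> v) \<le> length (xs @ ys)" using wlen_le[of "xs @ ys"] xs ys by simp
  then show ?thesis using xs ys by simp
qed

end

locale RSH = RS +
  fixes h :: 'a
  assumes highest: "highest_root \<Phi> \<Delta> h"
begin

abbreviation "It \<equiv> I_tilde \<Delta> h"
abbreviation "PI \<equiv> pos_roots_I \<Phi> \<Delta> h"
abbreviation "XI \<equiv> X_I \<Phi> \<Delta> h"

lemma hPhi: "h \<in> \<Phi>" using highest by (simp add: highest_root_def)

lemma h_minus: "\<beta> \<in> \<Phi> \<Longrightarrow> e \<in> \<Delta> \<Longrightarrow> coord e (h - \<beta>) \<ge> 0"
  using highest by (simp add: highest_root_def nonneg_comb_iff)

lemma dom_nonneg: "(\<forall>d\<in>\<Delta>. 0 \<le> v \<bullet> d) \<Longrightarrow> (\<forall>e\<in>\<Delta>. 0 \<le> coord e x) \<Longrightarrow> 0 \<le> v \<bullet> x"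
  unfolding inner_expand[of v x] by (intro sum_nonneg) simp

lemma h_dom: "d \<in> \<Delta> \<Longrightarrow> 0 \<le> h \<bullet> d"
proof (rule ccontr)
  assume d: "d \<in> \<Delta>" and "\<not> 0 \<le> h \<bullet> d"
  then have neg: "h \<bullet> d < 0" by simp
  have dP: "d \<in> \<Phi>" using d Delta_sub by auto
  have dd: "d \<bullet> d > 0" using nz[OF dP] by simp
  have "refl d h \<in> \<Phi>" using refl_closed[OF dP hPhi] .
  then have "coord d (h - refl d h) \<ge> 0" using h_minus d by blast
  moreover have "coord d (h - refl d h) = 2 * (h \<bullet> d) / (d \<bullet> d)"
    using d by (simp add: refl_def linear_scale[OF coord_linear] coord_basis)
  moreover have "2 * (h \<bullet> d) / (d \<bullet> d) < 0" using neg dd by (simp add: divide_neg_pos)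
  ultimately show False by simp
qed

lemma h_dom': "\<forall>d\<in>\<Delta>. 0 \<le> h \<bullet> d" using h_dom by blast

lemma pos_h: "\<beta> \<in> P \<Longrightarrow> 0 \<le> h \<bullet> \<beta>"
  using dom_nonneg[OF h_dom'] by (simp add: pos_iff)

lemma neg_h: "\<beta> \<in> \<Phi> \<Longrightarrow> \<beta> \<notin> P \<Longrightarrow> \<beta> \<bullet> h \<le> 0"
  using pos_h[OF neg_pos] by (simp add: inner_commute)

lemma It_sub: "It \<subseteq> \<Delta>" by (auto simp: I_tilde_def)

lemma span_I_coord: "x \<in> span It \<Longrightarrow> e \<in> \<Delta> - It \<Longrightarrow> coord e x = 0"
  by (rule linear_eq_0_on_span[OF coord_linear]) (auto simp: coord_basis I_tilde_def)

lemma span_I_orth: assumes "\<forall>e\<in>\<Delta> - It. coord e x = 0" shows "h \<bullet> x = 0"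
  unfolding inner_expand[of h x] using assms by (intro sum.neutral) (auto simp: I_tilde_def)

lemma orth_coord: assumes g: "\<gamma> \<in> \<Phi>" "\<gamma> \<bullet> h = 0" shows "\<forall>e\<in>\<Delta> - It. coord e \<gamma> = 0"
proof -
  have s: "(\<Sum>e\<in>\<Delta>. coord e \<gamma> * (h \<bullet> e)) = 0" using inner_expand[of h \<gamma>] g(2) by (simp add: inner_commute)
  have z: "\<forall>e\<in>\<Delta>. coord e \<gamma> * (h \<bullet> e) = 0"
  proof (cases "\<forall>e\<in>\<Delta>. coord e \<gamma> \<ge> 0")
    case True
    then show ?thesis using s finD h_dom by (subst (asm) sum_nonneg_eq_0_iff) auto
  next
    case False
    then have c: "\<forall>e\<in>\<Delta>. coord e \<gamma> \<le> 0" using root_sign[OF g(1)] by blast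
    have "(\<Sum>e\<in>\<Delta>. - (coord e \<gamma> * (h \<bullet> e))) = 0" using s by (simp add: sum_negf)
    then have "\<forall>e\<in>\<Delta>. - (coord e \<gamma> * (h \<bullet> e)) = 0"
      using finD h_dom c by (subst (asm) sum_nonneg_eq_0_iff) (auto simp: mult_nonpos_nonneg)
    then show ?thesis by simp
  qed
  show ?thesis using z by (auto simp: I_tilde_def)
qed

lemma PI_iff: "\<beta> \<in> PI \<longleftrightarrow> \<beta> \<in> P \<and> (\<forall>e\<in>\<Delta> - It. coord e \<beta> = 0)"
proof
  assume "\<beta> \<in> PI"
  then show "\<beta> \<in> P \<and> (\<forall>e\<in>\<Delta> - It. coord e \<beta> = 0)"
    using span_I_coord by (auto simp: pos_roots_I_def)
next
  assume a: "\<beta> \<in> P \<and> (\<forall>e\<in>\<Delta> - It. coord e \<beta> = 0)"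
  have "(\<Sum>e\<in>\<Delta>. coord e \<beta> *\<^sub>R e) \<in> span It"
  proof (rule span_sum)
    fix e assume e: "e \<in> \<Delta>"
    show "coord e \<beta> *\<^sub>R e \<in> span It"
    proof (cases "e \<in> It")
      case True then show ?thesis by (intro span_scale span_base)
    next
      case False then show ?thesis using a e by (simp add: span_zero)
    qed
  qed
  then have "\<beta> \<in> span It" by (subst expand) 
  then show "\<beta> \<in> PI" using a by (simp add: pos_roots_I_def)
qed

lemma XI_iff: "w \<in> XI \<longleftrightarrow> w \<in> W \<and> (\<forall>\<beta>\<in>PI. w \<beta> \<in> P)"
  by (auto simp: X_I_def)

lemma uniq: assumes w1: "w1 \<in> XI" and w2: "w2 \<in> XI" and eq: "w1 h = w2 h" shows "w1 = w2"
proof -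
  have w1W: "w1 \<in> W" and w2W: "w2 \<in> W" using w1 w2 by (auto simp: XI_iff)
  obtain v where v: "v \<in> W" "v \<circ> w1 = id" "w1 \<circ> v = id" using W_inv[OF w1W] by blast
  have v1: "\<And>x. v (w1 x) = x" and v2: "\<And>x. w1 (v x) = x" using v(2,3) by (auto simp: fun_eq_iff)
  define u where "u = v \<circ> w2"
  have uW: "u \<in> W" unfolding u_def using W_comp[OF v(1) w2W] .
  have uh: "u h = h" unfolding u_def using eq[symmetric] v1 by simp
  have w2u: "w2 = w1 \<circ> u" unfolding u_def using v2 by (simp add: fun_eq_iff)
  show ?thesis
  proof (rule ccontr)
    assume ne: "w1 \<noteq> w2"
    have "u \<noteq> id" using ne w2u by auto
    then obtain d where d: "d \<in> \<Delta>" "u d \<notin> P" using thmA[OF uW] by blast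
    have dP: "d \<in> \<Phi>" using d Delta_sub by auto
    have udP: "u d \<in> \<Phi>" using W_Phi[OF uW dP] .
    have "h \<bullet> d = u h \<bullet> u d" using W_inner[OF uW] by simp
    also have "\<dots> = u d \<bullet> h" using uh by (simp add: inner_commute)
    also have "\<dots> \<le> 0" using neg_h[OF udP d(2)] .
    finally have hd: "h \<bullet> d = 0" using h_dom[OF d(1)] by simp
    have "d \<in> It" using d(1) hd by (simp add: I_tilde_def)
    then have dI: "d \<in> PI" unfolding PI_iff using Delta_pos[OF d(1)] d(1) by (auto simp: coord_basis)
    have wd: "w2 d \<in> P" using w2 dI by (simp add: XI_iff)
    have m: "- u d \<in> P" using neg_pos[OF udP d(2)] .
    have "(- u d) \<bullet> h = - (u d \<bullet> u h)" using uh by simp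
    also have "\<dots> = 0" using W_inner[OF uW] hd by (simp add: inner_commute)
    finally have "\<forall>e\<in>\<Delta> - It. coord e (- u d) = 0" using orth_coord neg_closed[OF udP] by blast
    then have "- u d \<in> PI" using m PI_iff by blast
    then have "w1 (- u d) \<in> P" using w1 by (simp add: XI_iff)
    then have "- w1 (u d) \<in> P" using W_neg[OF w1W] by simp
    then have "- (- w1 (u d)) \<notin> P" by (rule pos_not_neg)
    then have "w2 d \<notin> P" using w2u by simp
    then show False using wd by blast
  qed
qed

lemma exists_dominant: assumes a: "\<alpha> \<in> \<Phi>" shows "\<exists>w\<in>W. \<forall>d\<in>\<Delta>. 0 \<le> w \<alpha> \<bullet> d"
proof -
  define Orb where "Orb = (\<lambda>w. w \<alpha>) ` W"
  have Orbsub: "Orb \<subseteq> \<Phi>" unfolding Orb_def using W_Phi a by blast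
  have finOrb: "finite Orb" using finite_subset[OF Orbsub finPhi] .
  have "\<alpha> \<in> Orb" unfolding Orb_def using W_id' by force
  then have neOrb: "Orb \<noteq> {}" by blast
  define M where "M = Max (ht ` Orb)"
  have "M \<in> ht ` Orb" unfolding M_def using finOrb neOrb by (intro Max_in) auto
  then obtain \<beta> where b: "\<beta> \<in> Orb" "ht \<beta> = M" by blast
  have Mge: "\<And>\<gamma>. \<gamma> \<in> Orb \<Longrightarrow> ht \<gamma> \<le> M" unfolding M_def using finOrb by (intro Max_ge) auto
  obtain w where w: "w \<in> W" "\<beta> = w \<alpha>" using b(1) unfolding Orb_def by blast
  have "\<forall>d\<in>\<Delta>. 0 \<le> \<beta> \<bullet> d"
  proof (rule ccontr)
    assume "\<not> ?thesis"
    then obtain d where d: "d \<in> \<Delta>" "\<beta> \<bullet> d < 0" by (auto simp: not_le)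
    have dP: "d \<in> \<Phi>" using d Delta_sub by auto
    have dd: "d \<bullet> d > 0" using nz[OF dP] by simp
    have rw: "(refl d \<circ> w) \<in> W" using weyl_group.step[OF dP w(1)] .
    have "refl d \<beta> = (refl d \<circ> w) \<alpha>" using w(2) by simp
    then have "refl d \<beta> \<in> Orb" unfolding Orb_def using rw by (rule image_eqI)
    then have "ht (refl d \<beta>) \<le> M" by (rule Mge)
    moreover have "ht (refl d \<beta>) > ht \<beta>" unfolding ht_refl[OF d(1)]
      using d(2) dd by (simp add: divide_neg_pos)
    ultimately show False using b(2) by simp
  qed
  then show ?thesis using w by blast
qed

lemma dom_long_eq_h:
  assumes b: "\<beta> \<in> \<Phi>" "\<forall>d\<in>\<Delta>. 0 \<le> \<beta> \<bullet> d" "h \<bullet> h \<le> \<beta> \<bullet> \<beta>"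
  shows "\<beta> = h"
proof -
  have c: "\<forall>e\<in>\<Delta>. 0 \<le> coord e (h - \<beta>)" using h_minus[OF b(1)] by blast
  have 1: "0 \<le> h \<bullet> (h - \<beta>)" using dom_nonneg[OF h_dom' c] .
  have 2: "0 \<le> \<beta> \<bullet> (h - \<beta>)" using dom_nonneg[OF b(2) c] .
  have "(h - \<beta>) \<bullet> (h - \<beta>) = h \<bullet> (h - \<beta>) - \<beta> \<bullet> (h - \<beta>)" by (simp add: inner_diff_left)
  also have "\<dots> = 0" using 1 2 b(3) by (simp add: inner_diff_right inner_commute)
  finally show ?thesis by simp
qed

lemma x_exists:
  assumes a: "long_root \<Phi> \<alpha>"
  shows "\<exists>u\<in>XI. u h = \<alpha>"
proof -
  have aP: "\<alpha> \<in> \<Phi>" and long: "\<forall>\<gamma>\<in>\<Phi>. \<gamma> \<bullet> \<gamma> \<le> \<alpha> \<bullet> \<alpha>" using a by (auto simp: long_root_def)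
  obtain w where w: "w \<in> W" "\<forall>d\<in>\<Delta>. 0 \<le> w \<alpha> \<bullet> d" using exists_dominant[OF aP] by blast
  have "w \<alpha> \<bullet> w \<alpha> = \<alpha> \<bullet> \<alpha>" using W_inner[OF w(1)] .
  then have "w \<alpha> = h" using dom_long_eq_h[OF W_Phi[OF w(1) aP] w(2)] long hPhi by simp
  obtain v where v: "v \<in> W" "v \<circ> w = id" using W_inv[OF w(1)] by blast
  have "v h = \<alpha>" using v(2) \<open>w \<alpha> = h\<close> by (metis comp_apply id_apply)
  then have ex: "\<exists>u. u \<in> W \<and> u h = \<alpha>" using v(1) by blast
  obtain u where u: "u \<in> W \<and> u h = \<alpha>" and umin: "\<forall>y. y \<in> W \<and> y h = \<alpha> \<longrightarrow> ninv u \<le> ninv y"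
    using ex_has_least_nat[of "\<lambda>u. u \<in> W \<and> u h = \<alpha>" _ ninv] ex by blast
  have "u \<in> XI"
  proof (rule ccontr)
    assume "u \<notin> XI"
    then obtain \<beta> where b: "\<beta> \<in> PI" "u \<beta> \<notin> P" using u by (auto simp: XI_iff)
    have "\<not> (\<forall>d\<in>It. u d \<in> P)"
      using W_pos_prop[of u It \<beta>] u It_sub b PI_iff by blast
    then obtain d where d: "d \<in> It" "u d \<notin> P" by blast
    have dD: "d \<in> \<Delta>" and hd: "h \<bullet> d = 0" using d by (auto simp: I_tilde_def)
    have dP: "d \<in> \<Phi>" using dD Delta_sub by auto
    have "u \<circ> refl d \<in> W" using W_comp[OF _ refl_W[OF dP]] u by blast
    moreover have "(u \<circ> refl d) h = \<alpha>" using u refl_orth[of h d] hd by simp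
    ultimately have "ninv u \<le> ninv (u \<circ> refl d)" using umin by blast
    moreover have "ninv (u \<circ> refl d) = ninv u - 1" using ninv_step(1)[OF _ dD, of u] u d by simp
    moreover have "ninv u \<ge> 1" using ninv_step(2)[OF _ dD, of u] u d by simp
    ultimately show False by simp
  qed
  then show ?thesis using u by blast
qed

lemma x_root_prop:
  assumes "long_root \<Phi> \<alpha>"
  shows "x_root \<Phi> \<Delta> h \<alpha> \<in> XI \<and> x_root \<Phi> \<Delta> h \<alpha> h = \<alpha>"
proof -
  have "\<exists>!w. w \<in> XI \<and> w h = \<alpha>" using x_exists[OF assms] uniq by blast
  then show ?thesis unfolding x_root_def by (rule theI')
qed

lemma refl_pos_inner:
  assumes a: "\<alpha> \<in> P" and g: "\<gamma> \<in> P" and r: "refl \<alpha> \<gamma> \<notin> P"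
  shows "\<gamma> \<bullet> \<alpha> > 0"
proof (rule ccontr)
  assume "\<not> ?thesis"
  then have le: "\<gamma> \<bullet> \<alpha> \<le> 0" by simp
  have aP: "\<alpha> \<in> \<Phi>" and gP: "\<gamma> \<in> \<Phi>" using a g by (auto simp: pos_iff)
  have aa: "\<alpha> \<bullet> \<alpha> > 0" using nz[OF aP] by simp
  have c: "2 * (\<gamma> \<bullet> \<alpha>) / (\<alpha> \<bullet> \<alpha>) \<le> 0" using le aa by (simp add: divide_nonpos_pos)
  have "coord e (refl \<alpha> \<gamma>) \<ge> 0" if e: "e \<in> \<Delta>" for e
  proof -
    have "coord e (refl \<alpha> \<gamma>) = coord e \<gamma> - 2 * (\<gamma> \<bullet> \<alpha>) / (\<alpha> \<bullet> \<alpha>) * coord e \<alpha>"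
      by (simp add: refl_def linear_diff[OF coord_linear] linear_scale[OF coord_linear])
    moreover have "coord e \<gamma> \<ge> 0" "coord e \<alpha> \<ge> 0" using a g e by (auto simp: pos_iff)
    moreover have "2 * (\<gamma> \<bullet> \<alpha>) / (\<alpha> \<bullet> \<alpha>) * coord e \<alpha> \<le> 0"
      using c \<open>coord e \<alpha> \<ge> 0\<close> by (rule mult_nonpos_nonneg)
    ultimately show ?thesis by linarith
  qed
  then have "refl \<alpha> \<gamma> \<in> P" using refl_closed[OF aP gP] by (simp add: pos_iff)
  then show False using r by simp
qed

lemma counting:
  assumes x: "x \<in> W" "x h = \<alpha>" and a: "\<alpha> \<in> P"
  shows "ninv x + ninv (refl \<alpha>) \<le> ninv (refl \<alpha> \<circ> x)"
proof -
  have aP: "\<alpha> \<in> \<Phi>" using a by (simp add: pos_iff)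
  obtain xi where xi: "xi \<in> W" "xi \<circ> x = id" "x \<circ> xi = id" using W_inv[OF x(1)] by blast
  have i1: "\<And>y. xi (x y) = y" and i2: "\<And>y. x (xi y) = y" using xi(2,3) by (auto simp: fun_eq_iff)
  have key: "xi \<gamma> \<in> P" if g: "\<gamma> \<in> P" "refl \<alpha> \<gamma> \<notin> P" for \<gamma>
  proof (rule ccontr)
    assume n: "xi \<gamma> \<notin> P"
    have gP: "\<gamma> \<in> \<Phi>" using g by (simp add: pos_iff)
    have "xi \<gamma> \<bullet> h = x (xi \<gamma>) \<bullet> x h" using W_inner[OF x(1)] by simp
    also have "\<dots> = \<gamma> \<bullet> \<alpha>" using i2 x(2) by simp
    finally have "xi \<gamma> \<bullet> h > 0" using refl_pos_inner[OF a g] by simp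
    moreover have "xi \<gamma> \<bullet> h \<le> 0" using neg_h[OF W_Phi[OF xi(1) gP] n] .
    ultimately show False by simp
  qed
  have s1: "N x \<subseteq> N (refl \<alpha> \<circ> x)"
  proof
    fix \<beta> assume "\<beta> \<in> N x"
    then have b: "\<beta> \<in> P" "x \<beta> \<notin> P" by (auto simp: N_def)
    have bP: "\<beta> \<in> \<Phi>" using b by (simp add: pos_iff)
    have g: "- x \<beta> \<in> P" using W_dich[OF x(1) bP b(2)] .
    have "refl \<alpha> (x \<beta>) \<notin> P"
    proof
      assume r: "refl \<alpha> (x \<beta>) \<in> P"
      have "refl \<alpha> (- x \<beta>) = - refl \<alpha> (x \<beta>)" using linear_neg[OF refl_linear] .
      then have "refl \<alpha> (- x \<beta>) \<notin> P" using pos_not_neg[OF r] by simp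
      then have "xi (- x \<beta>) \<in> P" using key[OF g] by blast
      moreover have "xi (- x \<beta>) = - \<beta>" using W_neg[OF xi(1)] i1 by simp
      ultimately show False using pos_not_neg[OF b(1)] by simp
    qed
    then show "\<beta> \<in> N (refl \<alpha> \<circ> x)" using b(1) by (simp add: N_def)
  qed
  have s2: "xi ` N (refl \<alpha>) \<subseteq> N (refl \<alpha> \<circ> x)"
  proof
    fix \<beta> assume "\<beta> \<in> xi ` N (refl \<alpha>)"
    then obtain \<gamma> where g: "\<gamma> \<in> P" "refl \<alpha> \<gamma> \<notin> P" "\<beta> = xi \<gamma>" by (auto simp: N_def)
    have "xi \<gamma> \<in> P" using key[OF g(1,2)] .
    moreover have "(refl \<alpha> \<circ> x) (xi \<gamma>) \<notin> P" using g(2) i2 by simp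
    ultimately show "\<beta> \<in> N (refl \<alpha> \<circ> x)" using g(3) by (simp add: N_def)
  qed
  have disj: "N x \<inter> xi ` N (refl \<alpha>) = {}"
  proof (rule ccontr)
    assume "N x \<inter> xi ` N (refl \<alpha>) \<noteq> {}"
    then obtain \<gamma> where g: "\<gamma> \<in> N (refl \<alpha>)" "xi \<gamma> \<in> N x" by blast
    have "\<gamma> \<in> P" using g(1) by (simp add: N_def)
    moreover have "x (xi \<gamma>) \<notin> P" using g(2) by (simp add: N_def)
    ultimately show False using i2 by simp
  qed
  have inj: "inj_on xi X" for X by (metis i2 inj_onI)
  have "ninv x + ninv (refl \<alpha>) = card (N x \<union> xi ` N (refl \<alpha>))"
    unfolding ninv_def using disj finN card_image[OF inj] by (subst card_Un_disjoint) auto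
  also have "\<dots> \<le> ninv (refl \<alpha> \<circ> x)" unfolding ninv_def
    using s1 s2 finN by (intro card_mono) auto
  finally show ?thesis .
qed

end


theorem proposition1p7:
  fixes \<Phi> \<Delta> :: "'a::euclidean_space set" and h \<alpha> :: 'a
  assumes "root_system \<Phi>" and "reduced \<Phi>" and "irreducible_rs \<Phi>"
    and "root_basis \<Phi> \<Delta>" and "highest_root \<Phi> \<Delta> h"
    and "\<alpha> \<in> pos_roots \<Phi> \<Delta>" and "long_root \<Phi> \<alpha>"
  shows "x_root \<Phi> \<Delta> h (- \<alpha>) = refl \<alpha> \<circ> x_root \<Phi> \<Delta> h \<alpha> \<and>
         wlen \<Delta> (x_root \<Phi> \<Delta> h (- \<alpha>)) = wlen \<Delta> (refl \<alpha> \<circ> x_root \<Phi> \<Delta> h \<alpha>) \<and>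
         wlen \<Delta> (refl \<alpha> \<circ> x_root \<Phi> \<Delta> h \<alpha>) = wlen \<Delta> (refl \<alpha>) + wlen \<Delta> (x_root \<Phi> \<Delta> h \<alpha>)"
proof -
  interpret RSH \<Phi> \<Delta> h
    using assms(1,2,4,5) by (intro RSH.intro RS.intro RSH_axioms.intro)
  have aP: "\<alpha> \<in> P" using assms(6) .
  have aPhi: "\<alpha> \<in> \<Phi>" using aP by (simp add: pos_iff)
  define x where "x = x_root \<Phi> \<Delta> h \<alpha>"
  have xX: "x \<in> XI" and xh: "x h = \<alpha>" using x_root_prop[OF assms(7)] unfolding x_def by auto
  have xW: "x \<in> W" using xX by (simp add: XI_iff)
  have sW: "refl \<alpha> \<circ> x \<in> W" using weyl_group.step[OF aPhi xW] .
  have sX: "refl \<alpha> \<circ> x \<in> XI"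
    unfolding XI_iff
  proof (intro conjI ballI)
    show "refl \<alpha> \<circ> x \<in> W" by (rule sW)
    fix \<beta> assume b: "\<beta> \<in> PI"
    have xb: "x \<beta> \<in> P" using xX b by (simp add: XI_iff)
    have "h \<bullet> \<beta> = 0" using b PI_iff span_I_orth by blast
    then have "x \<beta> \<bullet> \<alpha> = 0" using W_inner[OF xW, of \<beta> h] xh by (simp add: inner_commute)
    then have "refl \<alpha> (x \<beta>) = x \<beta>" by (rule refl_orth)
    then show "(refl \<alpha> \<circ> x) \<beta> \<in> P" using xb by simp
  qed
  have sxh: "(refl \<alpha> \<circ> x) h = - \<alpha>" using xh refl_self[OF nz[OF aPhi]] by simp
  have eq1: "x_root \<Phi> \<Delta> h (- \<alpha>) = refl \<alpha> \<circ> x"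
    unfolding x_root_def
  proof (rule the_equality)
    show "refl \<alpha> \<circ> x \<in> XI \<and> (refl \<alpha> \<circ> x) h = - \<alpha>" using sX sxh by blast
    fix w assume "w \<in> XI \<and> w h = - \<alpha>"
    then show "w = refl \<alpha> \<circ> x" using uniq sX sxh by metis
  qed
  have le: "wlen \<Delta> (refl \<alpha> \<circ> x) \<le> wlen \<Delta> (refl \<alpha>) + wlen \<Delta> x"
    using wlen_sub[OF refl_W[OF aPhi] xW] .
  have ge: "wlen \<Delta> x + wlen \<Delta> (refl \<alpha>) \<le> wlen \<Delta> (refl \<alpha> \<circ> x)"
    using counting[OF xW xh aP] wlen_ninv[OF xW] wlen_ninv[OF refl_W[OF aPhi]] wlen_ninv[OF sW]
    by simp
  have eq3: "wlen \<Delta> (refl \<alpha> \<circ> x) = wlen \<Delta> (refl \<alpha>) + wlen \<Delta> x" using le ge by simp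
  show ?thesis using eq1 eq3 unfolding x_def by simp
qed

end
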